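(* Let $(\mathcal{M},\mathcal{L})$ be a regular symplectic pair with $\mathcal{M},\mathcal{L}\in\mathbb{C}^{2n\times2n}$ and $\mathrm{ind}_\infty(\mathcal{M},\mathcal{L})\le1$. Let $\hat n\le n$, $\ell=n-\hat n$, $U_0,U_\infty\in\mathbb{C}^{2n\times\ell}$, $U_1\in\mathbb{C}^{2n\times2\hat n}$, $\mathbf{U}=[U_1\,|\,U_0,U_\infty]$ and a symplectic $\widehat{\mathcal{S}}\in\mathbb{C}^{2\hat n\times2\hat n}$ satisfy $\mathbf{U}^H\mathcal{J}_n\mathbf{U}=\mathcal{J}_{\hat n}\oplus\mathcal{J}_\ell$, $\mathcal{M}U_0=0$, $\mathcal{L}U_\infty=0$, $\mathcal{M}U_1=\mathcal{L}U_1\widehat{\mathcal{S}}$, and let $\widehat{\mathcal{H}}$ be a Hamiltonian matrix with $e^{\widehat{\mathcal{H}}}=\widehat{\mathcal{S}}$. Define $$\mathcal{H}=\mathbf{U}(\widehat{\mathcal{H}}\oplus 0_{2\ell})(\mathcal{J}_{\hat n}\oplus\mathcal{J}_\ell)^H\mathbf{U}^H\mathcal{J}_n,$$ $$\Pi_0=\mathbf{U}(I_{2\hat n}\oplus I_\ell\oplus 0_\ell)(\mathcal{J}_{\hat n}\oplus\mathcal{J}_\ell)^H\mathbf{U}^H\mathcal{J}_n,\qquad \Pi_\infty=\mathbf{U}(I_{2\hat n}\oplus 0_\ell\oplus I_\ell)(\mathcal{J}_{\hat n}\oplus\mathcal{J}_\ell)^H\mathbf{U}^H\mathcal{J}_n.$$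 Then $\mathcal{M}\Pi_0=\mathcal{L}\Pi_\infty e^{\mathcal{H}}$.
   Context: $\mathcal{J}_m=\begin{bmatrix}0&I_m\\-I_m&0\end{bmatrix}$. A matrix $\mathcal{H}\in\mathbb{C}^{2m\times2m}$ is Hamiltonian if $\mathcal{H}\mathcal{J}_m=(\mathcal{H}\mathcal{J}_m)^H$; $\mathcal{S}$ is symplectic if $\mathcal{S}\mathcal{J}_m\mathcal{S}^H=\mathcal{J}_m$. A pair $(\mathcal{M},\mathcal{L})$ is symplectic if $\mathcal{M}\mathcal{J}_n\mathcal{M}^H=\mathcal{L}\mathcal{J}_n\mathcal{L}^H$, regular if $\det(\mathcal{M}-\lambda\mathcal{L})\ne0$ for some $\lambda$. $\mathrm{ind}_\infty(A,B)$ is the nilpotency index of the nilpotent block $N$ in the Kronecker canonical form $PAQ=\mathrm{diag}(J,I)$, $PBQ=\mathrm{diag}(I,N)$ of a regular pair, and is $0$ if $B$ is invertible. *)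

theory Defs
  imports "Jordan_Normal_Form.Matrix" "Jordan_Normal_Form.Determinant" Complex_Main
begin

definition ctrans :: "complex mat \<Rightarrow> complex mat" where
  "ctrans A = mat (dim_col A) (dim_row A) (\<lambda>(i,j). cnj (A $$ (j,i)))"

definition Jmat :: "nat \<Rightarrow> complex mat" where
  "Jmat m = four_block_mat (0\<^sub>m m m) (1\<^sub>m m) (- 1\<^sub>m m) (0\<^sub>m m m)"

definition dsum :: "complex mat \<Rightarrow> complex mat \<Rightarrow> complex mat" where
  "dsum A B = four_block_mat A (0\<^sub>m (dim_row A) (dim_col B)) (0\<^sub>m (dim_row B) (dim_col A)) B"

definition hcat :: "complex mat \<Rightarrow> complex mat \<Rightarrow> complex mat" where
  "hcat A B = mat (dim_row A) (dim_col A + dim_col B)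
     (\<lambda>(i,j). if j < dim_col A then A $$ (i,j) else B $$ (i, j - dim_col A))"

definition mexp :: "complex mat \<Rightarrow> complex mat" where
  "mexp A = mat (dim_row A) (dim_col A)
     (\<lambda>(i,j). \<Sum>k. (A ^\<^sub>m k) $$ (i,j) / of_nat (fact k))"

definition hamiltonian :: "nat \<Rightarrow> complex mat \<Rightarrow> bool" where
  "hamiltonian m H \<longleftrightarrow> H \<in> carrier_mat (2*m) (2*m) \<and>
     H * Jmat m = ctrans (H * Jmat m)"

definition symplectic :: "nat \<Rightarrow> complex mat \<Rightarrow> bool" where
  "symplectic m S \<longleftrightarrow> S \<in> carrier_mat (2*m) (2*m) \<and>
     S * Jmat m * ctrans S = Jmat m"

definition symplectic_pair :: "nat \<Rightarrow> complex mat \<Rightarrow> complex mat \<Rightarrow> bool" where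
  "symplectic_pair n M L \<longleftrightarrow> M \<in> carrier_mat (2*n) (2*n) \<and> L \<in> carrier_mat (2*n) (2*n) \<and>
     M * Jmat n * ctrans M = L * Jmat n * ctrans L"

definition regular_pair :: "complex mat \<Rightarrow> complex mat \<Rightarrow> bool" where
  "regular_pair A B \<longleftrightarrow> (\<exists>z::complex. det (A - z \<cdot>\<^sub>m B) \<noteq> 0)"

definition kcf :: "complex mat \<Rightarrow> complex mat \<Rightarrow> complex mat \<Rightarrow> complex mat
    \<Rightarrow> complex mat \<Rightarrow> complex mat \<Rightarrow> bool" where
  "kcf A B P Q Jb Nb \<longleftrightarrow>
     (let N = dim_row A; d = dim_row Nb in
      A \<in> carrier_mat N N \<and> B \<in> carrier_mat N N \<and>
      P \<in> carrier_mat N N \<and> Q \<in> carrier_mat N N \<and> invertible_mat P \<and> invertible_mat Q \<and>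
      d \<le> N \<and> Nb \<in> carrier_mat d d \<and> Jb \<in> carrier_mat (N - d) (N - d) \<and>
      (\<exists>k. Nb ^\<^sub>m k = 0\<^sub>m d d) \<and>
      P * A * Q = dsum Jb (1\<^sub>m d) \<and> P * B * Q = dsum (1\<^sub>m (N - d)) Nb)"

text \<open>Nilpotency index of the nilpotent block of the KCF (0 if B invertible).
  The index does not depend on the chosen KCF, since the nilpotent block is
  unique up to similarity.\<close>
definition ind_inf :: "complex mat \<Rightarrow> complex mat \<Rightarrow> nat" where
  "ind_inf A B = (if invertible_mat B then 0 else
     (LEAST k. \<exists>P Q Jb Nb. kcf A B P Q Jb Nb \<and> Nb ^\<^sub>m k = 0\<^sub>m (dim_row Nb) (dim_row Nb)))"

end

theory Submission
  imports Defs
begin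


lemma ctrans_alt: "ctrans A = map_mat cnj (transpose_mat A)"
  by (rule eq_matI, auto simp: ctrans_def)

lemma ctrans_dim[simp]: "dim_row (ctrans A) = dim_col A" "dim_col (ctrans A) = dim_row A"
  by (auto simp: ctrans_def)

lemma ctrans_carrier[simp]: "A \<in> carrier_mat r c \<Longrightarrow> ctrans A \<in> carrier_mat c r"
  by (auto simp: ctrans_def)

lemma ctrans_fb: assumes "A \<in> carrier_mat nr1 nc1" "B \<in> carrier_mat nr1 nc2"
    "C \<in> carrier_mat nr2 nc1" "D \<in> carrier_mat nr2 nc2"
  shows "ctrans (four_block_mat A B C D) = four_block_mat (ctrans A) (ctrans C) (ctrans B) (ctrans D)"
  unfolding ctrans_alt
  by (subst transpose_four_block_mat[OF assms], subst map_four_block_mat, use assms in auto)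

lemma ctrans_zero[simp]: "ctrans (0\<^sub>m a b) = 0\<^sub>m b a"
  by (rule eq_matI, auto simp: ctrans_def)
lemma ctrans_one[simp]: "ctrans (1\<^sub>m a) = 1\<^sub>m a"
  by (rule eq_matI, auto simp: ctrans_def)
lemma ctrans_mone[simp]: "ctrans (- 1\<^sub>m a) = - 1\<^sub>m a"
  by (rule eq_matI, auto simp: ctrans_def)

lemma uminus_zero_mat[simp]: "- 0\<^sub>m a b = (0\<^sub>m a b :: complex mat)"
  by (rule eq_matI, auto)

lemma Jmat_carrier[simp]: "Jmat m \<in> carrier_mat (2*m) (2*m)"
  unfolding Jmat_def mult_2 by auto

lemma JJ_J: "ctrans (Jmat m) * Jmat m = 1\<^sub>m (2*m)"
proof -
  have "ctrans (Jmat m) = four_block_mat (0\<^sub>m m m) (- 1\<^sub>m m) (1\<^sub>m m) (0\<^sub>m m m)"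
    unfolding Jmat_def by (subst ctrans_fb, auto)
  then have "ctrans (Jmat m) * Jmat m = four_block_mat (0\<^sub>m m m) (- 1\<^sub>m m) (1\<^sub>m m) (0\<^sub>m m m) *
     four_block_mat (0\<^sub>m m m) (1\<^sub>m m) (- 1\<^sub>m m) (0\<^sub>m m m)" unfolding Jmat_def by simp
  also have "\<dots> = four_block_mat (1\<^sub>m m) (0\<^sub>m m m) (0\<^sub>m m m) (1\<^sub>m m)"
    by (subst mult_four_block_mat[of _ m m _ m _ m _ _ m _ m], auto)
  finally show ?thesis by (simp add: mult_2)
qed

lemma dsum_carrier[simp]: "A \<in> carrier_mat a a' \<Longrightarrow> B \<in> carrier_mat b b' \<Longrightarrow> dsum A B \<in> carrier_mat (a+b) (a'+b')"
  unfolding dsum_def by auto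

lemma dsum_dim[simp]: "dim_row (dsum A B) = dim_row A + dim_row B" "dim_col (dsum A B) = dim_col A + dim_col B"
  by (simp_all add: dsum_def)

lemma ctrans_dsum: "A \<in> carrier_mat a a' \<Longrightarrow> B \<in> carrier_mat b b' \<Longrightarrow> ctrans (dsum A B) = dsum (ctrans A) (ctrans B)"
  unfolding dsum_def by (subst ctrans_fb, auto)

lemma dsum_mult: "A \<in> carrier_mat a a' \<Longrightarrow> B \<in> carrier_mat b b' \<Longrightarrow> C \<in> carrier_mat a' a'' \<Longrightarrow> D \<in> carrier_mat b' b''
  \<Longrightarrow> dsum A B * dsum C D = dsum (A*C) (B*D)"
  unfolding dsum_def by (subst mult_four_block_mat[of _ a a' _ b' _ b _ _ a'' _ b''], auto)

lemma WW: "ctrans (dsum (Jmat a) (Jmat b)) * dsum (Jmat a) (Jmat b) = 1\<^sub>m (2*a+2*b)"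
  by (simp add: ctrans_dsum[of _ "2*a" "2*a" _ "2*b" "2*b"] dsum_mult[of _ "2*a" "2*a" _ "2*b" "2*b" _ "2*a" _ "2*b"] JJ_J,
      simp add: dsum_def)

lemma hcat_carrier[simp]: "A \<in> carrier_mat r a \<Longrightarrow> B \<in> carrier_mat r b \<Longrightarrow> hcat A B \<in> carrier_mat r (a+b)"
  unfolding hcat_def by auto

lemma hcat_index: "i < dim_row A \<Longrightarrow> j < dim_col A + dim_col B \<Longrightarrow>
   hcat A B $$ (i,j) = (if j < dim_col A then A $$ (i,j) else B $$ (i, j - dim_col A))"
  by (simp add: hcat_def)
lemma hcat_dim[simp]: "dim_row (hcat A B) = dim_row A" "dim_col (hcat A B) = dim_col A + dim_col B"
  by (simp_all add: hcat_def)

lemma mult_hcat: assumes "M \<in> carrier_mat q r" "A \<in> carrier_mat r a" "B \<in> carrier_mat r b"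
  shows "M * hcat A B = hcat (M*A) (M*B)"
proof -
  have c: "col (hcat A B) j = (if j < a then col A j else col B (j - a))" if "j < a + b" for j
    using assms that by (intro eq_vecI, auto simp: hcat_index)
  show ?thesis
  proof (rule eq_matI)
    fix i j assume "i < dim_row (hcat (M * A) (M * B))" "j < dim_col (hcat (M * A) (M * B))"
    then have i: "i < q" and j: "j < a + b" using assms by auto
    have "(M * hcat A B) $$ (i,j) = row M i \<bullet> col (hcat A B) j" using i j assms by simp
    also have "\<dots> = hcat (M * A) (M * B) $$ (i, j)"
      using i j assms by (subst hcat_index, auto simp: c)
    finally show "(M * hcat A B) $$ (i,j) = hcat (M * A) (M * B) $$ (i, j)" .
  qed (use assms in auto)
qed

lemma hcat_mult_dsum: assumes "A \<in> carrier_mat r a" "B \<in> carrier_mat r b" "C \<in> carrier_mat a c" "D \<in> carrier_mat b d"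
  shows "hcat A B * dsum C D = hcat (A*C) (B*D)"
proof -
  have rw: "row (hcat A B) i = row A i @\<^sub>v row B i" if "i < r" for i
    using assms that by (intro eq_vecI, auto simp: hcat_index)
  have cl1: "col (dsum C D) j = col C j @\<^sub>v col (0\<^sub>m b c) j" if "j < c" for j
    unfolding dsum_def using assms that by (subst col_four_block_mat, auto)
  have cl2: "col (dsum C D) j = col (0\<^sub>m a d) (j - c) @\<^sub>v col D (j - c)" if "\<not> j < c" "j < c + d" for j
    unfolding dsum_def using assms that by (subst col_four_block_mat(2), auto)
  show ?thesis
  proof (rule eq_matI)
    fix i j assume ij: "i < dim_row (hcat (A * C) (B * D))" "j < dim_col (hcat (A * C) (B * D))"
    then have i: "i < r" and j: "j < c + d" using assms by auto
    have e: "(hcat A B * dsum C D) $$ (i, j) = row (hcat A B) i \<bullet> col (dsum C D) j"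
      using i j assms by (subst index_mult_mat, auto)
    show "(hcat A B * dsum C D) $$ (i, j) = hcat (A * C) (B * D) $$ (i, j)"
    proof (cases "j < c")
      case True
      then show ?thesis using assms i j unfolding e
        by (simp add: rw cl1 hcat_index, subst scalar_prod_append[of _ a _ b], auto)
    next
      case False
      then show ?thesis using assms i j unfolding e
        by (simp add: rw cl2 hcat_index, subst scalar_prod_append[of _ a _ b], auto)
    qed
  qed (use assms in \<open>auto simp: dsum_def\<close>)
qed



lemma pow_entry_bound:
  fixes A :: "complex mat"
  assumes A: "A \<in> carrier_mat N N"
  shows "\<forall>i<N. \<forall>j<N. norm ((A ^\<^sub>m k) $$ (i,j)) \<le> (\<Sum>a<N. \<Sum>b<N. norm (A$$(a,b))) ^ k"
proof (induction k)
  case 0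
  then show ?case using A by auto
next
  case (Suc k)
  define c where "c = (\<Sum>a<N. \<Sum>b<N. norm (A$$(a,b)))"
  have c0: "0 \<le> c" unfolding c_def by (intro sum_nonneg, auto)
  show ?case
  proof (intro allI impI)
    fix i j assume i: "i < N" and j: "j < N"
    have e: "(A ^\<^sub>m Suc k) $$ (i,j) = (\<Sum>m<N. (A ^\<^sub>m k) $$ (i,m) * A $$ (m,j))"
      using A i j by (simp add: scalar_prod_def lessThan_atLeast0)
    have "norm ((A ^\<^sub>m Suc k) $$ (i,j)) \<le> (\<Sum>m<N. norm ((A ^\<^sub>m k) $$ (i,m)) * norm (A $$ (m,j)))"
      unfolding e by (rule order.trans[OF norm_sum], simp add: norm_mult)
    also have "\<dots> \<le> (\<Sum>m<N. c ^ k * norm (A $$ (m,j)))"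
      using Suc.IH i unfolding c_def by (intro sum_mono mult_right_mono, auto)
    also have "\<dots> = c ^ k * (\<Sum>m<N. norm (A $$ (m,j)))" by (simp add: sum_distrib_left)
    also have "\<dots> \<le> c ^ k * c"
    proof (rule mult_left_mono)
      show "(\<Sum>m<N. norm (A $$ (m,j))) \<le> c" unfolding c_def
        by (rule sum_mono, rule member_le_sum, use j in auto)
    qed (use c0 in auto)
    finally show "norm ((A ^\<^sub>m Suc k) $$ (i,j)) \<le> (\<Sum>a<N. \<Sum>b<N. norm (A$$(a,b))) ^ Suc k"
      unfolding c_def by (simp add: mult.commute)
  qed
qed

lemma exp_summable:
  fixes A :: "complex mat"
  assumes A: "A \<in> carrier_mat N N" and i: "i < N" and j: "j < N"
  shows "summable (\<lambda>k. (A ^\<^sub>m k) $$ (i,j) / of_nat (fact k))"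
proof (rule summable_comparison_test)
  define c where "c = (\<Sum>a<N. \<Sum>b<N. norm (A$$(a,b)))"
  show "\<exists>N0. \<forall>k\<ge>N0. norm ((A ^\<^sub>m k) $$ (i,j) / of_nat (fact k)) \<le> c ^ k / fact k"
  proof (intro exI allI impI)
    fix k :: nat
    have "norm ((A ^\<^sub>m k) $$ (i,j)) \<le> c ^ k" using pow_entry_bound[OF A, of k] i j c_def by auto
    moreover have "norm ((A ^\<^sub>m k) $$ (i,j) / of_nat (fact k)) = norm ((A ^\<^sub>m k) $$ (i,j)) / fact k"
      by (simp add: norm_divide)
    ultimately show "norm ((A ^\<^sub>m k) $$ (i,j) / of_nat (fact k)) \<le> c ^ k / fact k"
      by (simp add: divide_right_mono del: of_nat_fact)
  qed
  show "summable (\<lambda>k. c ^ k / fact k)" using summable_exp[of c] by (simp add: field_simps)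
qed

lemma mexp_index: "i < dim_row A \<Longrightarrow> j < dim_col A \<Longrightarrow> mexp A $$ (i,j) = (\<Sum>k. (A ^\<^sub>m k) $$ (i,j) / of_nat (fact k))"
  by (simp add: mexp_def)

lemma mexp_dim[simp]: "dim_row (mexp A) = dim_row A" "dim_col (mexp A) = dim_col A"
  by (simp_all add: mexp_def)

lemma mexp_carrier[simp]: "A \<in> carrier_mat N N \<Longrightarrow> mexp A \<in> carrier_mat N N"
  by (simp add: mexp_def)

lemma triple_index: fixes U :: "complex mat" assumes "U \<in> carrier_mat N N" "X \<in> carrier_mat N N" "V \<in> carrier_mat N N" "i < N" "j < N"
  shows "(U * X * V) $$ (i,j) = (\<Sum>b<N. \<Sum>a<N. U $$ (i,a) * X $$ (a,b) * V $$ (b,j))"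
proof -
  have "(U*X*V)$$(i,j) = (\<Sum>b<N. (U*X)$$(i,b) * V$$(b,j))"
    using assms by (subst index_mult_mat, auto simp: scalar_prod_def lessThan_atLeast0 intro!: sum.cong)
  also have "\<dots> = (\<Sum>b<N. (\<Sum>a<N. U $$ (i,a) * X $$ (a,b)) * V$$(b,j))"
    using assms by (intro sum.cong refl, subst index_mult_mat, auto simp: scalar_prod_def lessThan_atLeast0 intro!: sum.cong)
  finally show ?thesis by (simp add: sum_distrib_right)
qed

lemma pow_conj: fixes U :: "complex mat" assumes U: "U \<in> carrier_mat N N" and B: "B \<in> carrier_mat N N" and V: "V \<in> carrier_mat N N"
  and VU: "V * U = 1\<^sub>m N" and UV: "U * V = 1\<^sub>m N"
  shows "(U * B * V) ^\<^sub>m k = U * (B ^\<^sub>m k) * V"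
proof (induction k)
  case 0
  then show ?case using U V B UV by simp
next
  case (Suc k)
  have Bk: "B ^\<^sub>m k \<in> carrier_mat N N" using B by simp
  have VUY: "V * (U * Y) = Y" if "Y \<in> carrier_mat N N'" for Y N'
    using U V that by (subst assoc_mult_mat[symmetric], auto simp: VU)
  have UBk: "U * B ^\<^sub>m k \<in> carrier_mat N N" using U Bk by simp
  have BV: "B * V \<in> carrier_mat N N" using B V by simp
  have UBV: "U * (B * V) \<in> carrier_mat N N" using U BV by simp
  have "(U * B * V) ^\<^sub>m Suc k = U * (B ^\<^sub>m k) * V * (U * B * V)" using Suc by simp
  also have "\<dots> = U * (B ^\<^sub>m k) * V * (U * (B * V))" using assoc_mult_mat[OF U B V] by simp
  also have "\<dots> = (U * (B ^\<^sub>m k)) * (V * (U * (B * V)))" using assoc_mult_mat[OF UBk V UBV] by simp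
  also have "\<dots> = (U * (B ^\<^sub>m k)) * (B * V)" using VUY[OF BV] by simp
  also have "\<dots> = (U * (B ^\<^sub>m k)) * B * V" using assoc_mult_mat[OF UBk B V] by simp
  also have "\<dots> = U * (B ^\<^sub>m k * B) * V" using assoc_mult_mat[OF U Bk B] by simp
  finally show ?case by simp
qed

lemma mexp_conj: fixes U :: "complex mat" assumes U: "U \<in> carrier_mat N N" and B: "B \<in> carrier_mat N N" and V: "V \<in> carrier_mat N N"
  and VU: "V * U = 1\<^sub>m N" and UV: "U * V = 1\<^sub>m N"
  shows "mexp (U * B * V) = U * mexp B * V"
proof (rule eq_matI)
  fix i j assume "i < dim_row (U * mexp B * V)" "j < dim_col (U * mexp B * V)"
  then have i: "i < N" and j: "j < N" using U V by auto
  have s: "(\<lambda>k. U $$ (i,a) * ((B ^\<^sub>m k) $$ (a,b) / of_nat (fact k)) * V $$ (b,j)) sums (U $$ (i,a) * mexp B $$ (a,b) * V $$ (b,j))"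
    if "a < N" "b < N" for a b
  proof -
    have "(\<lambda>k. (B ^\<^sub>m k) $$ (a,b) / of_nat (fact k)) sums mexp B $$ (a,b)"
      using summable_sums[OF exp_summable[OF B that]] B that by (simp add: mexp_index)
    then show ?thesis by (intro sums_mult2 sums_mult)
  qed
  have e1: "((U*B*V) ^\<^sub>m k) $$ (i,j) = (U*(B ^\<^sub>m k)*V) $$ (i,j)" for k
    by (simp only: pow_conj[OF U B V VU UV])
  have e2: "(U*mexp B*V)$$(i,j) = (\<Sum>b<N. \<Sum>a<N. U $$ (i,a) * mexp B $$ (a,b) * V $$ (b,j))"
    by (rule triple_index, use U B V i j in auto)
  have e3: "(U*(B ^\<^sub>m k)*V)$$(i,j) / of_nat (fact k) = (\<Sum>b<N. \<Sum>a<N. U $$ (i,a) * ((B ^\<^sub>m k) $$ (a,b) / of_nat (fact k)) * V $$ (b,j))" for k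
    by (subst triple_index[of _ N], use U B V i j in \<open>auto simp: sum_divide_distrib\<close>)
  have "(\<lambda>k. \<Sum>b<N. \<Sum>a<N. U $$ (i,a) * ((B ^\<^sub>m k) $$ (a,b) / of_nat (fact k)) * V $$ (b,j)) sums
        (\<Sum>b<N. \<Sum>a<N. U $$ (i,a) * mexp B $$ (a,b) * V $$ (b,j))"
    using s by (intro sums_sum, auto)
  then have "(\<lambda>k. ((U * B * V) ^\<^sub>m k) $$ (i,j) / of_nat (fact k)) sums (U * mexp B * V) $$ (i,j)"
    unfolding e1 e2 e3 .
  moreover have "mexp (U * B * V) $$ (i,j) = (\<Sum>k. ((U * B * V) ^\<^sub>m k) $$ (i,j) / of_nat (fact k))"
    by (rule mexp_index, use U B V i j in auto)
  ultimately show "mexp (U * B * V) $$ (i,j) = (U * mexp B * V) $$ (i,j)"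
    by (simp add: sums_iff)
qed (use U V in auto)

lemma dsum_index: "i < dim_row X + dim_row Y \<Longrightarrow> j < dim_col X + dim_col Y \<Longrightarrow>
  dsum X Y $$ (i,j) = (if i < dim_row X then if j < dim_col X then X $$ (i,j) else 0
     else if j < dim_col X then 0 else Y $$ (i - dim_row X, j - dim_col X))"
  unfolding dsum_def by simp

lemma mexp_dsum: fixes A :: "complex mat" assumes A: "A \<in> carrier_mat n n" and B: "B \<in> carrier_mat m m"
  shows "mexp (dsum A B) = dsum (mexp A) (mexp B)"
proof -
  have p: "(dsum A B) ^\<^sub>m k = dsum (A ^\<^sub>m k) (B ^\<^sub>m k)" for k
    unfolding dsum_def using A B by (simp add: pow_four_block_mat)
  show ?thesis
  proof (rule eq_matI)
    fix i j assume "i < dim_row (dsum (mexp A) (mexp B))" "j < dim_col (dsum (mexp A) (mexp B))"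
    then have i: "i < n + m" and j: "j < n + m" using A B by auto
    show "mexp (dsum A B) $$ (i,j) = dsum (mexp A) (mexp B) $$ (i,j)"
      proof -
      have d: "dim_row A = n" "dim_col A = n" "dim_row B = m" "dim_col B = m" using A B by auto
      have q: "dsum (A ^\<^sub>m k) (B ^\<^sub>m k) $$ (i,j) = (if i < n then if j < n then (A ^\<^sub>m k) $$ (i,j) else 0
     else if j < n then 0 else (B ^\<^sub>m k) $$ (i - n, j - n))" for k
        using i j A B by (subst dsum_index, auto)
      have r: "dsum (mexp A) (mexp B) $$ (i,j) = (if i < n then if j < n then mexp A $$ (i,j) else 0
     else if j < n then 0 else mexp B $$ (i - n, j - n))"
        using i j A B by (subst dsum_index, auto)
      have l: "mexp (dsum A B) $$ (i,j) = (\<Sum>k. dsum (A ^\<^sub>m k) (B ^\<^sub>m k) $$ (i,j) / of_nat (fact k))"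
        using i j A B by (subst mexp_index, auto simp: p)
      show ?thesis unfolding l r q using i j A B by (auto simp: mexp_index)
    qed
  qed (use A B in auto)
qed

lemma mexp_zero: "mexp (0\<^sub>m m m) = 1\<^sub>m m"
proof -
  have p: "(0\<^sub>m m m) ^\<^sub>m k = (if k = 0 then 1\<^sub>m m else (0\<^sub>m m m :: complex mat))" for k
    by (induction k, auto)
  show ?thesis
  proof (rule eq_matI)
    fix i j assume "i < dim_row (1\<^sub>m m)" "j < dim_col (1\<^sub>m m)"
    then have i: "i < m" and j: "j < m" by auto
    have "(\<lambda>k. ((0\<^sub>m m m) ^\<^sub>m k) $$ (i,j) / of_nat (fact k)) = (\<lambda>k. if k = 0 then (1\<^sub>m m :: complex mat) $$ (i,j) else 0)"
      using i j by (auto simp: p)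
    moreover have "(\<lambda>k. if k = 0 then (1\<^sub>m m :: complex mat) $$ (i,j) else 0) sums (1\<^sub>m m $$ (i,j))"
      using sums_single[of 0 "\<lambda>_. (1\<^sub>m m :: complex mat) $$ (i,j)"] by simp
    ultimately show "mexp (0\<^sub>m m m) $$ (i,j) = 1\<^sub>m m $$ (i,j)"
      using i j by (simp add: mexp_index sums_iff)
  qed auto
qed



lemma conj_mult: fixes U :: "complex mat"
  assumes U: "U \<in> carrier_mat N N" and X: "X \<in> carrier_mat N N" and Y: "Y \<in> carrier_mat N N"
    and V: "V \<in> carrier_mat N N" and VU: "V * U = 1\<^sub>m N"
  shows "(U * X * V) * (U * Y * V) = U * (X * Y) * V"
proof -
  have UX: "U * X \<in> carrier_mat N N" using U X by simp
  have YV: "Y * V \<in> carrier_mat N N" using Y V by simp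
  have UYV: "U * (Y * V) \<in> carrier_mat N N" using U YV by simp
  have VUY: "V * (U * (Y * V)) = Y * V"
  proof -
    have "V * (U * (Y * V)) = V * U * (Y * V)" by (simp only: assoc_mult_mat[OF V U YV])
    also have "\<dots> = Y * V" by (simp only: VU left_mult_one_mat[OF YV])
    finally show ?thesis .
  qed
  have "(U * X * V) * (U * Y * V) = (U * X * V) * (U * (Y * V))" by (simp only: assoc_mult_mat[OF U Y V])
  also have "\<dots> = (U * X) * (V * (U * (Y * V)))" by (simp only: assoc_mult_mat[OF UX V UYV])
  also have "\<dots> = (U * X) * (Y * V)" by (simp only: VUY)
  also have "\<dots> = (U * X) * Y * V" by (simp only: assoc_mult_mat[OF UX Y V])
  also have "\<dots> = U * (X * Y) * V" by (simp only: assoc_mult_mat[OF U X Y])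
  finally show ?thesis .
qed

lemma assoc3: fixes X :: "complex mat"
  assumes X: "X \<in> carrier_mat N N" and U: "U \<in> carrier_mat N N" and Y: "Y \<in> carrier_mat N N"
    and V: "V \<in> carrier_mat N N"
  shows "X * (U * Y * V) = X * U * Y * V"
proof -
  have UY: "U * Y \<in> carrier_mat N N" using U Y by simp
  have XU: "X * U \<in> carrier_mat N N" using U X by simp
  have "X * (U * Y * V) = X * (U * Y) * V" by (simp only: assoc_mult_mat[OF X UY V])
  also have "\<dots> = X * U * Y * V" by (simp only: assoc_mult_mat[OF X U Y])
  finally show ?thesis .
qed

theorem lemma2p6:
  fixes n nh l :: nat and M L U0 Uinf U1 Sh Hh :: "complex mat"
  assumes "symplectic_pair n M L" and "regular_pair M L" and "ind_inf M L \<le> 1"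
    and "nh \<le> n" and "l = n - nh"
    and "U0 \<in> carrier_mat (2*n) l" and "Uinf \<in> carrier_mat (2*n) l"
    and "U1 \<in> carrier_mat (2*n) (2*nh)"
    and "symplectic nh Sh"
    and "ctrans (hcat U1 (hcat U0 Uinf)) * Jmat n * hcat U1 (hcat U0 Uinf) = dsum (Jmat nh) (Jmat l)"
    and "M * U0 = 0\<^sub>m (2*n) l" and "L * Uinf = 0\<^sub>m (2*n) l"
    and "M * U1 = L * U1 * Sh"
    and "hamiltonian nh Hh" and "mexp Hh = Sh"
  shows "let U = hcat U1 (hcat U0 Uinf);
             JJ = ctrans (dsum (Jmat nh) (Jmat l));
             H = U * dsum Hh (0\<^sub>m (2*l) (2*l)) * JJ * ctrans U * Jmat n;
             Pi0 = U * dsum (1\<^sub>m (2*nh)) (dsum (1\<^sub>m l) (0\<^sub>m l l)) * JJ * ctrans U * Jmat n;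
             Piinf = U * dsum (1\<^sub>m (2*nh)) (dsum (0\<^sub>m l l) (1\<^sub>m l)) * JJ * ctrans U * Jmat n
         in M * Pi0 = L * Piinf * mexp H"
proof -
  note A = assms
  define N where "N = 2*n"
  have Nd: "2*nh + (l + l) = N" "2*nh + 2*l = N" using A(4,5) unfolding N_def by auto
  define U where "U = hcat U1 (hcat U0 Uinf)"
  define W where "W = dsum (Jmat nh) (Jmat l)"
  define JJ where "JJ = ctrans W"
  define V where "V = JJ * ctrans U * Jmat n"
  have M: "M \<in> carrier_mat N N" and L: "L \<in> carrier_mat N N"
    using A(1) unfolding symplectic_pair_def N_def by auto
  have Sh: "Sh \<in> carrier_mat (2*nh) (2*nh)" using A(9) unfolding symplectic_def by auto
  have Hh: "Hh \<in> carrier_mat (2*nh) (2*nh)" using A(14) unfolding hamiltonian_def by auto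
  have U0: "U0 \<in> carrier_mat N l" and Ui: "Uinf \<in> carrier_mat N l" and U1: "U1 \<in> carrier_mat N (2*nh)"
    using A(6-8) unfolding N_def by auto
  have U: "U \<in> carrier_mat N N" unfolding U_def using hcat_carrier[OF U1 hcat_carrier[OF U0 Ui]] Nd(1) by simp
  have W: "W \<in> carrier_mat N N" unfolding W_def using Nd(2) dsum_carrier[OF Jmat_carrier Jmat_carrier, of nh l] by simp
  have JJ: "JJ \<in> carrier_mat N N" unfolding JJ_def using W by simp
  have J: "Jmat n \<in> carrier_mat N N" unfolding N_def by simp
  have cU: "ctrans U \<in> carrier_mat N N" using U by simp
  have cUJ: "ctrans U * Jmat n \<in> carrier_mat N N" using cU J by simp
  have V: "V \<in> carrier_mat N N" unfolding V_def using JJ cU J by simp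
  have JW: "JJ * W = 1\<^sub>m N" unfolding JJ_def W_def using WW[of nh l] Nd by simp
  have VU: "V * U = 1\<^sub>m N"
  proof -
    have "V * U = JJ * ctrans U * Jmat n * U" unfolding V_def ..
    also have "\<dots> = JJ * (ctrans U * Jmat n) * U" using assoc_mult_mat[OF JJ cU J] by simp
    also have "\<dots> = JJ * (ctrans U * Jmat n * U)" using assoc_mult_mat[OF JJ cUJ U] by simp
    also have "\<dots> = JJ * W" using A(10) unfolding U_def W_def by simp
    finally show ?thesis using JW by simp
  qed
  have UV: "U * V = 1\<^sub>m N" using mat_mult_left_right_inverse[OF V U VU] .
  have asV: "X * JJ * ctrans U * Jmat n = X * V" if X: "X \<in> carrier_mat N N" for X
  proof -
    have XJ: "X * JJ \<in> carrier_mat N N" using X JJ by simp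
    have "X * JJ * ctrans U * Jmat n = X * JJ * (ctrans U * Jmat n)" using assoc_mult_mat[OF XJ cU J] by simp
    also have "\<dots> = X * (JJ * (ctrans U * Jmat n))" using assoc_mult_mat[OF X JJ cUJ] by simp
    also have "\<dots> = X * V" unfolding V_def using assoc_mult_mat[OF JJ cU J] by simp
    finally show ?thesis .
  qed
  define Bh where "Bh = dsum Hh (0\<^sub>m (2*l) (2*l))"
  define D0 where "D0 = dsum (1\<^sub>m (2*nh)) (dsum (1\<^sub>m l) (0\<^sub>m l l))"
  define Di where "Di = dsum (1\<^sub>m (2*nh)) (dsum (0\<^sub>m l l) (1\<^sub>m l))"
  define E where "E = dsum Sh (1\<^sub>m (2*l))"
  have Bh: "Bh \<in> carrier_mat N N" unfolding Bh_def using Nd dsum_carrier[OF Hh zero_carrier_mat, of "2*l" "2*l"] by simp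
  have D0: "D0 \<in> carrier_mat N N" unfolding D0_def using Nd(1)
    dsum_carrier[OF one_carrier_mat dsum_carrier[OF one_carrier_mat zero_carrier_mat], of "2*nh" l l l]
    dsum_carrier[OF one_carrier_mat dsum_carrier[OF zero_carrier_mat one_carrier_mat], of "2*nh" l l l] by simp
  have Di: "Di \<in> carrier_mat N N" unfolding Di_def using Nd(1)
    dsum_carrier[OF one_carrier_mat dsum_carrier[OF one_carrier_mat zero_carrier_mat], of "2*nh" l l l]
    dsum_carrier[OF one_carrier_mat dsum_carrier[OF zero_carrier_mat one_carrier_mat], of "2*nh" l l l] by simp
  have E: "E \<in> carrier_mat N N" unfolding E_def using Nd dsum_carrier[OF Sh one_carrier_mat, of "2*l"] by simp
  have UB: "U * Bh \<in> carrier_mat N N" "U * D0 \<in> carrier_mat N N" "U * Di \<in> carrier_mat N N"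
    using U Bh D0 Di by auto
  have mB: "mexp Bh = E" unfolding Bh_def E_def
    using mexp_dsum[OF Hh zero_carrier_mat] mexp_zero A(15) by simp
  have mH: "mexp (U * Bh * V) = U * E * V" using mexp_conj[OF U Bh V VU UV] mB by simp
  have LUS: "L * U1 * Sh \<in> carrier_mat N (2*nh)" using L U1 Sh by simp
  have MUi: "M * Uinf \<in> carrier_mat N l" using M Ui by simp
  have LU1: "L * U1 \<in> carrier_mat N (2*nh)" using L U1 by simp
  have LU0: "L * U0 \<in> carrier_mat N l" using L U0 by simp
  have Z: "0\<^sub>m N l \<in> carrier_mat N l" by simp
  have I2: "1\<^sub>m (2*nh) \<in> carrier_mat (2*nh) (2*nh)" by simp
  have D10: "dsum (1\<^sub>m l) (0\<^sub>m l l) \<in> carrier_mat (l+l) (l+l)" by (rule dsum_carrier, auto)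
  have D01: "dsum (0\<^sub>m l l) (1\<^sub>m l) \<in> carrier_mat (l+l) (l+l)" by (rule dsum_carrier, auto)
  have MU: "M * U * D0 = hcat (L * U1 * Sh) (hcat (0\<^sub>m N l) (0\<^sub>m N l))"
  proof -
    have "M * U = hcat (M*U1) (hcat (M*U0) (M*Uinf))"
      using mult_hcat[OF M U1 hcat_carrier[OF U0 Ui]] mult_hcat[OF M U0 Ui] unfolding U_def by simp
    also have "\<dots> = hcat (L * U1 * Sh) (hcat (0\<^sub>m N l) (M*Uinf))" using A(11,13) unfolding N_def by simp
    finally have "M * U * D0 = hcat (L * U1 * Sh) (hcat (0\<^sub>m N l) (M*Uinf)) * D0" by simp
    also have "\<dots> = hcat (L * U1 * Sh * 1\<^sub>m (2*nh)) (hcat (0\<^sub>m N l) (M*Uinf) * dsum (1\<^sub>m l) (0\<^sub>m l l))"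
      unfolding D0_def by (rule hcat_mult_dsum[OF LUS hcat_carrier[OF Z MUi] I2 D10])
    also have "hcat (0\<^sub>m N l) (M*Uinf) * dsum (1\<^sub>m l) (0\<^sub>m l l) = hcat (0\<^sub>m N l * 1\<^sub>m l) (M * Uinf * 0\<^sub>m l l)"
      by (rule hcat_mult_dsum[OF Z MUi], auto)
    finally show ?thesis using right_mult_one_mat[OF LUS] right_mult_zero_mat[OF MUi] by simp
  qed
  have LU: "L * U * Di * E = hcat (L * U1 * Sh) (hcat (0\<^sub>m N l) (0\<^sub>m N l))"
  proof -
    have "L * U = hcat (L*U1) (hcat (L*U0) (L*Uinf))"
      using mult_hcat[OF L U1 hcat_carrier[OF U0 Ui]] mult_hcat[OF L U0 Ui] unfolding U_def by simp
    also have "\<dots> = hcat (L * U1) (hcat (L*U0) (0\<^sub>m N l))" using A(12) unfolding N_def by simp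
    finally have "L * U * Di = hcat (L * U1) (hcat (L*U0) (0\<^sub>m N l)) * Di" by simp
    also have "\<dots> = hcat (L * U1 * 1\<^sub>m (2*nh)) (hcat (L*U0) (0\<^sub>m N l) * dsum (0\<^sub>m l l) (1\<^sub>m l))"
      unfolding Di_def by (rule hcat_mult_dsum[OF LU1 hcat_carrier[OF LU0 Z] I2 D01])
    also have "hcat (L*U0) (0\<^sub>m N l) * dsum (0\<^sub>m l l) (1\<^sub>m l) = hcat (L*U0 * 0\<^sub>m l l) (0\<^sub>m N l * 1\<^sub>m l)"
      by (rule hcat_mult_dsum[OF LU0 Z], auto)
    finally have "L * U * Di = hcat (L * U1) (hcat (0\<^sub>m N l) (0\<^sub>m N l))"
      using right_mult_one_mat[OF LU1] right_mult_zero_mat[OF LU0] by simp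
    then have "L * U * Di * E = hcat (L * U1) (hcat (0\<^sub>m N l) (0\<^sub>m N l)) * dsum Sh (1\<^sub>m (l+l))"
      unfolding E_def by (simp add: mult_2)
    also have "\<dots> = hcat (L * U1 * Sh) (hcat (0\<^sub>m N l) (0\<^sub>m N l) * 1\<^sub>m (l+l))"
      by (rule hcat_mult_dsum[OF LU1 hcat_carrier[OF Z Z] Sh], auto)
    finally show ?thesis by simp
  qed
  have DE: "Di * E \<in> carrier_mat N N" using Di E by simp
  have LU': "L * U \<in> carrier_mat N N" using L U by simp
  have "M * (U * D0 * V) = L * (U * Di * V) * (U * E * V)"
  proof -
    have "M * (U * D0 * V) = M * U * D0 * V" by (rule assoc3[OF M U D0 V])
    also have "\<dots> = L * U * Di * E * V" using MU LU by simp
    also have "\<dots> = L * U * (Di * E) * V" using assoc_mult_mat[OF LU' Di E] by simp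
    also have "\<dots> = L * (U * (Di * E) * V)" by (rule assoc3[OF L U DE V, symmetric])
    also have "\<dots> = L * ((U * Di * V) * (U * E * V))" using conj_mult[OF U Di E V VU] by simp
    also have "\<dots> = L * (U * Di * V) * (U * E * V)"
      by (rule assoc_mult_mat[symmetric, of _ N N _ N _ N], use L U Di V E in auto)
    finally show ?thesis .
  qed
  then show ?thesis
    unfolding Let_def U_def[symmetric] W_def[symmetric] JJ_def[symmetric] Bh_def[symmetric]
      D0_def[symmetric] Di_def[symmetric]
    by (simp only: asV UB mH)
qed


end
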